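(* Consider the Basilica replacement rule. Let $n\in\mathbb{N}$ and let $O_n$ be the graph with $n+3$ vertices and $2n+4$ edges described below. Then the sublevel complex $K(O_n)_{2n+3}$ is empty; equivalently, for every rearrangement $X(O_n)\to X(G)$ the graph $G$ has at least $2n+4$ edges (so every graph obtained from $O_n$ by a finite sequence of simple expansions and contractions has at least $2n+4$ edges).
   Context: Basilica replacement rule $e\to R$: $e$ is an edge $v\to w$; $R$ has vertices $v,w,4$ and edges $1\colon v\to4$, a loop $2$ at $4$, $3\colon 4\to w$. A simple expansion $G\lhd\varepsilon$ of a finite directed graph $G$ at an edge $\varepsilon$ (loops allowed) deletes $\varepsilon$ and inserts a new vertex $\varepsilon4$ with edges $\varepsilon1$ from the initial vertex of $\varepsilon$ to $\varepsilon4$, a loop $\varepsilon2$ at $\varepsilon4$, and $\varepsilon3$ from $\varepsilon4$ to the terminal vertex of $\varepsilon$; a simple contraction is the reverse. The graph $O_n$: vertices $u_0,\dots,u_n,p,l$; for each $0\le i<n$ two edges $u_i\to u_{i+1}$ and $u_{i+1}\to u_i$; an edge $v\colon u_0\to p$ and a loop $w$ at $p$; an edge $a\colon u_n\to l$ and a loop $b$ at $l$. For a base graph $G$, $K(G)$ denotes the rearrangement cube complex: its $0$-cubes are range equivalence classes $[f]$ of rearrangements $f\colon X(G)\to X(G')$ (homeomorphisms of limit spaces given piecewise on cells by canonical prefix-replacement maps, equivalently represented by a graph isomorphism between an expansion of $G$ and an expansion of $G'$), with cubes spanned by $\{[\Delta_T\circ f]: T\subseteq S\}$ for $S\subseteq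 E(G')$, $\Delta_T$ denoting expansion of the edges in $T$. The rank of $[f]$ is $|E(G')|$, extended affinely over cubes, and $K(G)_m$ is the subcomplex spanned by $0$-cubes of rank $\le m$. *)

theory Defs
  imports Main
begin

text \<open>Finite directed multigraphs (loops and parallel edges allowed).
  Vertex and edge names are natural numbers (an unbounded supply of fresh names).\<close>

record dgraph =
  verts :: "nat set"
  edges :: "nat set"
  src   :: "nat \<Rightarrow> nat"
  tgt   :: "nat \<Rightarrow> nat"

definition wf_graph :: "dgraph \<Rightarrow> bool" where
  "wf_graph G \<longleftrightarrow> finite (verts G) \<and> finite (edges G) \<and>
     (\<forall>e\<in>edges G. src G e \<in> verts G \<and> tgt G e \<in> verts G)"

text \<open>Simple expansion of G at edge eps for the Basilica replacement rule:
  delete eps : v -> w, add a fresh vertex x (= eps4), fresh edges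
  e1 : v -> x, a loop e2 at x, and e3 : x -> w.\<close>

definition simple_expansion :: "dgraph \<Rightarrow> nat \<Rightarrow> dgraph \<Rightarrow> bool" where
  "simple_expansion G eps H \<longleftrightarrow> wf_graph G \<and> eps \<in> edges G \<and>
     (\<exists>x e1 e2 e3. x \<notin> verts G \<and> e1 \<notin> edges G \<and> e2 \<notin> edges G \<and> e3 \<notin> edges G \<and>
        e1 \<noteq> e2 \<and> e1 \<noteq> e3 \<and> e2 \<noteq> e3 \<and>
        verts H = insert x (verts G) \<and>
        edges H = (edges G - {eps}) \<union> {e1, e2, e3} \<and>
        (\<forall>e\<in>edges G - {eps}. src H e = src G e \<and> tgt H e = tgt G e) \<and>
        src H e1 = src G eps \<and> tgt H e1 = x \<and>
        src H e2 = x \<and> tgt H e2 = x \<and>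
        src H e3 = x \<and> tgt H e3 = tgt G eps)"

definition expansion :: "dgraph \<Rightarrow> dgraph \<Rightarrow> bool" where
  "expansion = (\<lambda>G H. \<exists>eps. simple_expansion G eps H)\<^sup>*\<^sup>*"

definition graph_iso :: "dgraph \<Rightarrow> dgraph \<Rightarrow> bool" where
  "graph_iso G H \<longleftrightarrow> (\<exists>fv fe. bij_betw fv (verts G) (verts H) \<and> bij_betw fe (edges G) (edges H) \<and>
     (\<forall>e\<in>edges G. src H (fe e) = fv (src G e) \<and> tgt H (fe e) = fv (tgt G e)))"

text \<open>A rearrangement X(G) -> X(H) exists iff some expansion of G is isomorphic
  to some expansion of H (combinatorial representation of rearrangements).\<close>

definition has_rearrangement :: "dgraph \<Rightarrow> dgraph \<Rightarrow> bool" where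
  "has_rearrangement G H \<longleftrightarrow> (\<exists>G' H'. expansion G G' \<and> expansion H H' \<and> graph_iso G' H')"

text \<open>Vertices: u_i = i (i \<le> n), p = n+1, l = n+2.
  Edges: 2i : u_i -> u_(i+1), 2i+1 : u_(i+1) -> u_i (i < n);
  v = 2n : u_0 -> p; w = 2n+1 loop at p; a = 2n+2 : u_n -> l; b = 2n+3 loop at l.\<close>

definition O_graph :: "nat \<Rightarrow> dgraph" where
  "O_graph n = \<lparr> verts = {0..n+2}, edges = {0..<2*n+4},
     src = (\<lambda>e. if e < 2*n then (if even e then e div 2 else e div 2 + 1)
                else if e = 2*n then 0
                else if e = 2*n+1 then n+1
                else if e = 2*n+2 then n
                else n+2),
     tgt = (\<lambda>e. if e < 2*n then (if even e then e div 2 + 1 else e div 2)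
                else if e = 2*n then n+1
                else if e = 2*n+1 then n+1
                else n+2) \<rparr>"

end

theory Submission
  imports Defs
begin


definition step :: "dgraph \<Rightarrow> nat set \<Rightarrow> nat \<Rightarrow> nat \<Rightarrow> bool" where
  "step G F a b \<longleftrightarrow> (\<exists>e\<in>F. (src G e = a \<and> tgt G e = b) \<or> (src G e = b \<and> tgt G e = a))"

abbreviation conn :: "dgraph \<Rightarrow> nat set \<Rightarrow> nat \<Rightarrow> nat \<Rightarrow> bool" where
  "conn G F \<equiv> (step G F)\<^sup>*\<^sup>*"

definition indeg :: "dgraph \<Rightarrow> nat \<Rightarrow> nat" where
  "indeg G y = card {e\<in>edges G. tgt G e = y}"
definition outdeg :: "dgraph \<Rightarrow> nat \<Rightarrow> nat" where
  "outdeg G y = card {e\<in>edges G. src G e = y}"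

definition avoid :: "dgraph \<Rightarrow> nat \<Rightarrow> nat set" where
  "avoid G z = {e\<in>edges G. src G e \<noteq> z \<and> tgt G e \<noteq> z}"

definition Inv :: "nat \<Rightarrow> dgraph \<Rightarrow> bool" where
  "Inv n G \<longleftrightarrow> (\<exists>s p l. s \<in> verts G \<and> p \<in> verts G \<and> l \<in> verts G \<and> p \<noteq> l \<and>
     indeg G p = 2 \<and> outdeg G p = 1 \<and> indeg G l = 2 \<and> outdeg G l = 1 \<and>
     (if n = 0 then indeg G s = 0 \<and> outdeg G s = 2 else
      (\<exists>t Z. t \<in> verts G \<and> s \<noteq> t \<and> indeg G s = 1 \<and> outdeg G s = 2 \<and> indeg G t = 1 \<and> outdeg G t = 2 \<and>
         (\<forall>f\<in>edges G. conn G (edges G - {f}) s t) \<and> Z \<subseteq> verts G \<and> n - 1 \<le> card Z \<and>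
         (\<forall>z\<in>Z. indeg G z = 2 \<and> outdeg G z = 2 \<and> \<not> conn G (avoid G z) s t))))"

lemma rtranclp_map:
  assumes "\<And>a b. R a b \<Longrightarrow> S\<^sup>*\<^sup>* (f a) (f b)"
  shows "R\<^sup>*\<^sup>* a b \<Longrightarrow> S\<^sup>*\<^sup>* (f a) (f b)"
proof (induction rule: rtranclp.induct)
  case (rtrancl_refl a) then show ?case by simp
next
  case (rtrancl_into_rtrancl a b c)
  then show ?case using assms[of b c] by (meson rtranclp_trans)
qed

lemma card_fibers: "finite V \<Longrightarrow> finite E \<Longrightarrow> \<forall>e\<in>E. g e \<in> V \<Longrightarrow> card E = (\<Sum>y\<in>V. card {e\<in>E. g e = y})"
proof -
  assume a: "finite V" "finite E" "\<forall>e\<in>E. g e \<in> V"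
  have "E = (\<Union>y\<in>V. {e\<in>E. g e = y})" using a by auto
  then have "card E = card (\<Union>y\<in>V. {e\<in>E. g e = y})" by simp
  also have "\<dots> = (\<Sum>y\<in>V. card {e\<in>E. g e = y})"
    by (rule card_UN_disjoint) (use a in auto)
  finally show ?thesis .
qed

lemma Inv_card:
  assumes wf: "wf_graph G" and I: "Inv n G"
  shows "2*n + 4 \<le> card (edges G)"
proof -
  have fV: "finite (verts G)" and fE: "finite (edges G)" and et: "\<forall>e\<in>edges G. tgt G e \<in> verts G"
    using wf unfolding wf_graph_def by auto
  have tot: "card (edges G) = (\<Sum>y\<in>verts G. indeg G y)"
    unfolding indeg_def by (rule card_fibers[OF fV fE et])
  have mono: "\<And>S. S \<subseteq> verts G \<Longrightarrow> (\<Sum>y\<in>S. indeg G y) \<le> card (edges G)"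
    unfolding tot by (rule sum_mono2[OF fV]) auto
  from I obtain s p l where sp: "s \<in> verts G" "p \<in> verts G" "l \<in> verts G" "p \<noteq> l"
     "indeg G p = 2" "outdeg G p = 1" "indeg G l = 2" "outdeg G l = 1"
     and rest: "(if n = 0 then indeg G s = 0 \<and> outdeg G s = 2 else
      (\<exists>t Z. t \<in> verts G \<and> s \<noteq> t \<and> indeg G s = 1 \<and> outdeg G s = 2 \<and> indeg G t = 1 \<and> outdeg G t = 2 \<and>
         (\<forall>f\<in>edges G. conn G (edges G - {f}) s t) \<and> Z \<subseteq> verts G \<and> n - 1 \<le> card Z \<and>
         (\<forall>z\<in>Z. indeg G z = 2 \<and> outdeg G z = 2 \<and> \<not> conn G (avoid G z) s t)))"
    unfolding Inv_def by blast
  show ?thesis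
  proof (cases "n = 0")
    case True
    then have "indeg G s = 0" "outdeg G s = 2" using rest by auto
    then have "s \<noteq> p" "s \<noteq> l" using sp by auto
    then have "(\<Sum>y\<in>{p,l}. indeg G y) = 4" using sp by simp
    moreover have "(\<Sum>y\<in>{p,l}. indeg G y) \<le> card (edges G)" using mono[of "{p,l}"] sp by blast
    ultimately show ?thesis using True by simp
  next
    case False
    then obtain t Z where tz: "t \<in> verts G" "s \<noteq> t" "indeg G s = 1" "outdeg G s = 2" "indeg G t = 1" "outdeg G t = 2"
      "Z \<subseteq> verts G" "n - 1 \<le> card Z" "\<forall>z\<in>Z. indeg G z = 2 \<and> outdeg G z = 2"
      using rest by auto
    have d: "s \<noteq> p" "s \<noteq> l" "t \<noteq> p" "t \<noteq> l" using sp tz by auto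
    have fZ: "finite Z" using tz fV finite_subset by blast
    have dis: "{s,t,p,l} \<inter> Z = {}" using sp tz by fastforce
    have s4: "(\<Sum>y\<in>{s,t,p,l}. indeg G y) = 6" using sp tz d by simp
    have sZ: "(\<Sum>y\<in>Z. indeg G y) = 2 * card Z" using tz by simp
    have "(\<Sum>y\<in>{s,t,p,l} \<union> Z. indeg G y) = 6 + 2 * card Z"
      using sum.union_disjoint[OF _ fZ dis, of "indeg G"] s4 sZ by simp
    moreover have "(\<Sum>y\<in>{s,t,p,l} \<union> Z. indeg G y) \<le> card (edges G)"
      using mono sp tz by simp
    ultimately show ?thesis using tz False by linarith
  qed
qed




locale expd =
  fixes G H :: dgraph and eps x e1 e2 e3 :: nat
  assumes wf: "wf_graph G" and eps: "eps \<in> edges G"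
    and x: "x \<notin> verts G" and n1: "e1 \<notin> edges G" and n2: "e2 \<notin> edges G" and n3: "e3 \<notin> edges G"
    and d12: "e1 \<noteq> e2" and d13: "e1 \<noteq> e3" and d23: "e2 \<noteq> e3"
    and VH: "verts H = insert x (verts G)"
    and EH: "edges H = (edges G - {eps}) \<union> {e1, e2, e3}"
    and old: "\<forall>e\<in>edges G - {eps}. src H e = src G e \<and> tgt H e = tgt G e"
    and s1: "src H e1 = src G eps" and t1: "tgt H e1 = x"
    and s2: "src H e2 = x" and t2: "tgt H e2 = x"
    and s3: "src H e3 = x" and t3: "tgt H e3 = tgt G eps"
begin

lemma fV: "finite (verts G)" and fE: "finite (edges G)"
  and inV: "\<And>e. e \<in> edges G \<Longrightarrow> src G e \<in> verts G \<and> tgt G e \<in> verts G"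
  using wf unfolding wf_graph_def by auto

lemma neqx: "e \<in> edges G \<Longrightarrow> src G e \<noteq> x \<and> tgt G e \<noteq> x"
  using inV x by blast

lemma nx: "\<forall>e\<in>edges G. src G e \<noteq> x \<and> tgt G e \<noteq> x" using neqx by blast

lemma indeg_old: assumes y: "y \<in> verts G" shows "indeg H y = indeg G y"
proof -
  have xy: "x \<noteq> y" using x y by blast
  let ?A = "{e\<in>edges G. tgt G e = y}"
  show ?thesis
  proof (cases "tgt G eps = y")
    case True
    have "{e\<in>edges H. tgt H e = y} = insert e3 (?A - {eps})"
      using True old t1 t2 t3 xy unfolding EH by auto
    moreover have "card (insert e3 (?A - {eps})) = card ?A"
      proof -
      have "eps \<in> ?A" using True eps by simp
      then have "Suc (card (?A - {eps})) = card ?A" using fE by (intro card_Suc_Diff1) auto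
      moreover have "card (insert e3 (?A - {eps})) = Suc (card (?A - {eps}))"
        using n3 fE by (intro card_insert_disjoint) auto
      ultimately show ?thesis by simp
    qed
    ultimately show ?thesis unfolding indeg_def by simp
  next
    case False
    have "{e\<in>edges H. tgt H e = y} = ?A"
      using False old t1 t2 t3 xy n1 n2 n3 unfolding EH by auto
    then show ?thesis unfolding indeg_def by simp
  qed
qed

lemma outdeg_old: assumes y: "y \<in> verts G" shows "outdeg H y = outdeg G y"
proof -
  have xy: "x \<noteq> y" using x y by blast
  let ?A = "{e\<in>edges G. src G e = y}"
  show ?thesis
  proof (cases "src G eps = y")
    case True
    have "{e\<in>edges H. src H e = y} = insert e1 (?A - {eps})"
      using True old s1 s2 s3 xy unfolding EH by auto
    moreover have "card (insert e1 (?A - {eps})) = card ?A"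
      proof -
      have "eps \<in> ?A" using True eps by simp
      then have "Suc (card (?A - {eps})) = card ?A" using fE by (intro card_Suc_Diff1) auto
      moreover have "card (insert e1 (?A - {eps})) = Suc (card (?A - {eps}))"
        using n1 fE by (intro card_insert_disjoint) auto
      ultimately show ?thesis by simp
    qed
    ultimately show ?thesis unfolding outdeg_def by simp
  next
    case False
    have "{e\<in>edges H. src H e = y} = ?A"
      using False old s1 s2 s3 xy n1 n2 n3 unfolding EH by auto
    then show ?thesis unfolding outdeg_def by simp
  qed
qed

lemma indeg_x: "indeg H x = 2"
proof -
  have "{e\<in>edges H. tgt H e = x} = {e1, e2}"
    proof (rule set_eqI, rule iffI)
    fix e assume "e \<in> {e\<in>edges H. tgt H e = x}"
    then have "e \<in> edges G - {eps} \<or> e = e1 \<or> e = e2 \<or> e = e3" "tgt H e = x" using EH by auto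
    then show "e \<in> {e1, e2}" using old t3 neqx[OF eps] nx by auto
  next
    fix e assume "e \<in> {e1, e2}"
    then show "e \<in> {e\<in>edges H. tgt H e = x}" using EH t1 t2 by auto
  qed
  then show ?thesis unfolding indeg_def using d12 by simp
qed

lemma outdeg_x: "outdeg H x = 2"
proof -
  have "{e\<in>edges H. src H e = x} = {e2, e3}"
    proof (rule set_eqI, rule iffI)
    fix e assume "e \<in> {e\<in>edges H. src H e = x}"
    then have "e \<in> edges G - {eps} \<or> e = e1 \<or> e = e2 \<or> e = e3" "src H e = x" using EH by auto
    then show "e \<in> {e2, e3}" using old s1 neqx[OF eps] nx by auto
  next
    fix e assume "e \<in> {e2, e3}"
    then show "e \<in> {e\<in>edges H. src H e = x}" using EH s2 s3 by auto
  qed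
  then show ?thesis unfolding outdeg_def using d23 by simp
qed

lemma corr:
  assumes FG: "F \<subseteq> edges G" and FH: "F' \<subseteq> edges H"
    and same: "\<forall>e\<in>edges G - {eps}. e \<in> F' \<longleftrightarrow> e \<in> F"
    and ep: "eps \<in> F \<longleftrightarrow> e1 \<in> F' \<and> e3 \<in> F'"
    and a: "a \<in> verts G" and b: "b \<in> verts G"
  shows "conn H F' a b \<longleftrightarrow> conn G F a b"
proof
  assume c: "conn H F' a b"
  define \<pi> where "\<pi> y = (if y = x then (if e1 \<in> F' then src G eps else tgt G eps) else y)" for y
  have "\<And>u v. step H F' u v \<Longrightarrow> conn G F (\<pi> u) (\<pi> v)"
  proof -
    fix u v assume "step H F' u v"
    then obtain e where e: "e \<in> F'" and uv: "(src H e = u \<and> tgt H e = v) \<or> (src H e = v \<and> tgt H e = u)"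
      unfolding step_def by blast
    have "e \<in> edges G - {eps} \<or> e = e1 \<or> e = e2 \<or> e = e3" using e FH EH by auto
    then show "conn G F (\<pi> u) (\<pi> v)"
    proof (elim disjE)
      assume eo: "e \<in> edges G - {eps}"
      then have "e \<in> F" using same e by blast
      moreover have "\<pi> (src H e) = src G e" "\<pi> (tgt H e) = tgt G e"
        using eo old neqx unfolding \<pi>_def by auto
      moreover have "(src G e = \<pi> u \<and> tgt G e = \<pi> v) \<or> (src G e = \<pi> v \<and> tgt G e = \<pi> u)"
        using uv calculation(2,3) by auto
      ultimately have "step G F (\<pi> u) (\<pi> v)" unfolding step_def by blast
      then show ?thesis by blast
    next
      assume "e = e1"
      then have "\<pi> u = \<pi> v" using uv s1 t1 e neqx[OF eps] unfolding \<pi>_def by auto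
      then show ?thesis by simp
    next
      assume "e = e2"
      then have "\<pi> u = \<pi> v" using uv s2 t2 by auto
      then show ?thesis by simp
    next
      assume ee: "e = e3"
      show ?thesis
      proof (cases "e1 \<in> F'")
        case True
        then have "eps \<in> F" using ep e ee by blast
        moreover have px: "\<pi> x = src G eps" using True unfolding \<pi>_def by simp
        moreover have "\<pi> (tgt G eps) = tgt G eps" using neqx[OF eps] unfolding \<pi>_def by simp
        moreover have "(u = x \<and> v = tgt G eps) \<or> (v = x \<and> u = tgt G eps)" using uv s3 t3 ee by auto
        ultimately have "(src G eps = \<pi> u \<and> tgt G eps = \<pi> v) \<or> (src G eps = \<pi> v \<and> tgt G eps = \<pi> u)"
          by auto
        then have "step G F (\<pi> u) (\<pi> v)" using \<open>eps \<in> F\<close> unfolding step_def by blast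
        then show ?thesis by blast
      next
        case False
        then have "\<pi> u = \<pi> v" using uv s3 t3 ee neqx[OF eps] unfolding \<pi>_def by auto
        then show ?thesis by simp
      qed
    qed
  qed
  from rtranclp_map[of "step H F'" "step G F" \<pi>, OF this c]
  have "conn G F (\<pi> a) (\<pi> b)" .
  moreover have "\<pi> a = a" "\<pi> b = b" using a b x unfolding \<pi>_def by auto
  ultimately show "conn G F a b" by simp
next
  assume c: "conn G F a b"
  have "\<And>u v. step G F u v \<Longrightarrow> conn H F' u v"
  proof -
    fix u v assume "step G F u v"
    then obtain e where e: "e \<in> F" and uv: "(src G e = u \<and> tgt G e = v) \<or> (src G e = v \<and> tgt G e = u)"
      unfolding step_def by blast
    show "conn H F' u v"
    proof (cases "e = eps")
      case False
      then have "e \<in> F'" "src H e = src G e" "tgt H e = tgt G e" using same e FG old by auto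
      then have "step H F' u v" using uv unfolding step_def by metis
      then show ?thesis by blast
    next
      case True
      then have e13: "e1 \<in> F'" "e3 \<in> F'" using ep e by auto
      have "step H F' (src G eps) x" using e13 s1 t1 unfolding step_def by metis
      moreover have "step H F' x (tgt G eps)" using e13 s3 t3 unfolding step_def by metis
      ultimately have f: "conn H F' (src G eps) (tgt G eps)" by (meson converse_rtranclp_into_rtranclp r_into_rtranclp)
      have "step H F' (tgt G eps) x" using e13 s3 t3 unfolding step_def by metis
      moreover have "step H F' x (src G eps)" using e13 s1 t1 unfolding step_def by metis
      ultimately have g: "conn H F' (tgt G eps) (src G eps)" by (meson converse_rtranclp_into_rtranclp r_into_rtranclp)
      show ?thesis using f g uv True by auto
    qed
  qed
  from rtranclp_map[of "step G F" "step H F'" id] this c show "conn H F' a b" by simp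
qed

end



context expd begin

lemma wfH: "wf_graph H"
proof -
  have "\<forall>e\<in>edges H. src H e \<in> verts H \<and> tgt H e \<in> verts H"
  proof
    fix e assume e: "e \<in> edges H"
    then have "e \<in> edges G - {eps} \<or> e = e1 \<or> e = e2 \<or> e = e3" using EH by auto
    then show "src H e \<in> verts H \<and> tgt H e \<in> verts H"
      using old inV eps s1 t1 s2 t2 s3 t3 VH by auto
  qed
  then show ?thesis unfolding wf_graph_def using fV fE VH EH by simp
qed

lemma avoid_corr:
  assumes z: "z \<in> verts G" and a: "a \<in> verts G" and b: "b \<in> verts G"
  shows "conn H (avoid H z) a b \<longleftrightarrow> conn G (avoid G z) a b"
proof (rule corr[OF _ _ _ _ a b])
  show "avoid G z \<subseteq> edges G" "avoid H z \<subseteq> edges H" unfolding avoid_def by auto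
  show "\<forall>e\<in>edges G - {eps}. (e \<in> avoid H z) = (e \<in> avoid G z)"
    using old EH unfolding avoid_def by auto
  have "x \<noteq> z" using x z by blast
  then show "(eps \<in> avoid G z) = (e1 \<in> avoid H z \<and> e3 \<in> avoid H z)"
    using eps s1 t1 s3 t3 EH unfolding avoid_def by auto
qed

lemma avoid_x:
  assumes a: "a \<in> verts G" and b: "b \<in> verts G"
  shows "conn H (avoid H x) a b \<longleftrightarrow> conn G (edges G - {eps}) a b"
proof -
  have "avoid H x = edges G - {eps}"
  proof (rule set_eqI, rule iffI)
    fix e assume "e \<in> avoid H x"
    then have "e \<in> edges H" "src H e \<noteq> x" "tgt H e \<noteq> x" unfolding avoid_def by auto
    then show "e \<in> edges G - {eps}" using EH t1 s2 s3 by auto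
  next
    fix e assume e: "e \<in> edges G - {eps}"
    then show "e \<in> avoid H x" using old nx EH unfolding avoid_def by auto
  qed
  moreover have "conn H (edges G - {eps}) a b \<longleftrightarrow> conn G (edges G - {eps}) a b"
    by (rule corr[OF _ _ _ _ a b]) (use EH n1 in auto)
  ultimately show ?thesis by simp
qed

lemma bridge_fwd:
  assumes a: "a \<in> verts G" and b: "b \<in> verts G" and nb: "\<forall>f\<in>edges G. conn G (edges G - {f}) a b"
  shows "\<forall>f\<in>edges H. conn H (edges H - {f}) a b"
proof
  fix f assume f: "f \<in> edges H"
  then have "f \<in> edges G - {eps} \<or> f = e1 \<or> f = e2 \<or> f = e3" using EH by auto
  then show "conn H (edges H - {f}) a b"
  proof (elim disjE)
    assume f0: "f \<in> edges G - {eps}"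
    have "conn H (edges H - {f}) a b \<longleftrightarrow> conn G (edges G - {f}) a b"
      by (rule corr[OF _ _ _ _ a b]) (use EH f0 eps n1 n3 in auto)
    then show ?thesis using nb f0 by auto
  next
    assume f1: "f = e1"
    have "conn H (edges H - {f}) a b \<longleftrightarrow> conn G (edges G - {eps}) a b"
      by (rule corr[OF _ _ _ _ a b]) (use EH f1 n1 in auto)
    then show ?thesis using nb eps by auto
  next
    assume f2: "f = e2"
    have "conn H (edges H - {f}) a b \<longleftrightarrow> conn G (edges G) a b"
      by (rule corr[OF _ _ _ _ a b]) (use EH f2 eps n2 d12 d23 in auto)
    moreover have "conn G (edges G - {eps}) a b" using nb eps by auto
    moreover have "step G (edges G - {eps}) \<le> step G (edges G)" unfolding step_def by auto
    ultimately show ?thesis by (metis rtranclp_mono predicate2D)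
  next
    assume f3: "f = e3"
    have "conn H (edges H - {f}) a b \<longleftrightarrow> conn G (edges G - {eps}) a b"
      by (rule corr[OF _ _ _ _ a b]) (use EH f3 n3 in auto)
    then show ?thesis using nb eps by auto
  qed
qed

lemma bridge_bwd:
  assumes a: "a \<in> verts G" and b: "b \<in> verts G" and nb: "\<forall>f\<in>edges H. conn H (edges H - {f}) a b"
  shows "\<forall>f\<in>edges G. conn G (edges G - {f}) a b"
proof
  fix f assume f: "f \<in> edges G"
  show "conn G (edges G - {f}) a b"
  proof (cases "f = eps")
    case False
    have "conn H (edges H - {f}) a b \<longleftrightarrow> conn G (edges G - {f}) a b"
      by (rule corr[OF _ _ _ _ a b]) (use EH f False eps n1 n3 in auto)
    moreover have "f \<in> edges H" using EH f False by auto
    ultimately show ?thesis using nb by auto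
  next
    case True
    have "conn H (edges H - {e1}) a b \<longleftrightarrow> conn G (edges G - {eps}) a b"
      by (rule corr[OF _ _ _ _ a b]) (use EH n1 in auto)
    moreover have "e1 \<in> edges H" using EH by auto
    ultimately show ?thesis using nb True by auto
  qed
qed

lemma Inv_fwd: assumes I: "Inv n G" shows "Inv n H"
proof -
  from I obtain s p l where sp: "s \<in> verts G" "p \<in> verts G" "l \<in> verts G" "p \<noteq> l"
     "indeg G p = 2" "outdeg G p = 1" "indeg G l = 2" "outdeg G l = 1"
     and rest: "(if n = 0 then indeg G s = 0 \<and> outdeg G s = 2 else
      (\<exists>t Z. t \<in> verts G \<and> s \<noteq> t \<and> indeg G s = 1 \<and> outdeg G s = 2 \<and> indeg G t = 1 \<and> outdeg G t = 2 \<and>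
         (\<forall>f\<in>edges G. conn G (edges G - {f}) s t) \<and> Z \<subseteq> verts G \<and> n - 1 \<le> card Z \<and>
         (\<forall>z\<in>Z. indeg G z = 2 \<and> outdeg G z = 2 \<and> \<not> conn G (avoid G z) s t)))"
    unfolding Inv_def by blast
  have V: "verts G \<subseteq> verts H" using VH by auto
  show ?thesis
  proof (cases "n = 0")
    case True
    then show ?thesis unfolding Inv_def using sp rest V indeg_old outdeg_old
      by (intro exI[of _ s] exI[of _ p] exI[of _ l]) auto
  next
    case False
    then obtain t Z where tz: "t \<in> verts G" "s \<noteq> t" "indeg G s = 1" "outdeg G s = 2" "indeg G t = 1" "outdeg G t = 2"
      "\<forall>f\<in>edges G. conn G (edges G - {f}) s t"
      "Z \<subseteq> verts G" "n - 1 \<le> card Z" "\<forall>z\<in>Z. indeg G z = 2 \<and> outdeg G z = 2 \<and> \<not> conn G (avoid G z) s t"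
      using rest by auto
    have nb: "\<forall>f\<in>edges H. conn H (edges H - {f}) s t" using bridge_fwd sp tz by blast
    have zz: "\<forall>z\<in>Z. indeg H z = 2 \<and> outdeg H z = 2 \<and> \<not> conn H (avoid H z) s t"
    proof
      fix z assume "z \<in> Z"
      then have z: "z \<in> verts G" and "indeg G z = 2 \<and> outdeg G z = 2 \<and> \<not> conn G (avoid G z) s t"
        using tz by auto
      then show "indeg H z = 2 \<and> outdeg H z = 2 \<and> \<not> conn H (avoid H z) s t"
        using avoid_corr[OF z sp(1) tz(1)] indeg_old[OF z] outdeg_old[OF z] by simp
    qed
    have ex: "\<exists>t Z. t \<in> verts H \<and> s \<noteq> t \<and> indeg H s = 1 \<and> outdeg H s = 2 \<and> indeg H t = 1 \<and> outdeg H t = 2 \<and>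
         (\<forall>f\<in>edges H. conn H (edges H - {f}) s t) \<and> Z \<subseteq> verts H \<and> n - 1 \<le> card Z \<and>
         (\<forall>z\<in>Z. indeg H z = 2 \<and> outdeg H z = 2 \<and> \<not> conn H (avoid H z) s t)"
      apply (rule exI[of _ t], rule exI[of _ Z])
      using sp V indeg_old outdeg_old tz nb zz by auto
    have base: "s \<in> verts H \<and> p \<in> verts H \<and> l \<in> verts H \<and> p \<noteq> l \<and>
     indeg H p = 2 \<and> outdeg H p = 1 \<and> indeg H l = 2 \<and> outdeg H l = 1"
      using sp V indeg_old outdeg_old tz nb zz by auto
    show ?thesis unfolding Inv_def
      apply (rule exI[of _ s], rule exI[of _ p], rule exI[of _ l])
      using ex base False by simp
  qed
qed

lemma Inv_bwd: assumes I: "Inv n H" shows "Inv n G"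
proof -
  from I obtain s p l where sp: "s \<in> verts H" "p \<in> verts H" "l \<in> verts H" "p \<noteq> l"
     "indeg H p = 2" "outdeg H p = 1" "indeg H l = 2" "outdeg H l = 1"
     and rest: "(if n = 0 then indeg H s = 0 \<and> outdeg H s = 2 else
      (\<exists>t Z. t \<in> verts H \<and> s \<noteq> t \<and> indeg H s = 1 \<and> outdeg H s = 2 \<and> indeg H t = 1 \<and> outdeg H t = 2 \<and>
         (\<forall>f\<in>edges H. conn H (edges H - {f}) s t) \<and> Z \<subseteq> verts H \<and> n - 1 \<le> card Z \<and>
         (\<forall>z\<in>Z. indeg H z = 2 \<and> outdeg H z = 2 \<and> \<not> conn H (avoid H z) s t)))"
    unfolding Inv_def by blast
  have old22: "\<And>y. y \<in> verts H \<Longrightarrow> outdeg H y \<noteq> 2 \<or> indeg H y \<noteq> 2 \<Longrightarrow> y \<in> verts G"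
    using VH indeg_x outdeg_x by auto
  have pl: "p \<in> verts G" "l \<in> verts G" using old22 sp by auto
  have s: "s \<in> verts G" using old22 sp rest by (auto split: if_splits)
  show ?thesis
  proof (cases "n = 0")
    case True
    then show ?thesis unfolding Inv_def using sp pl s rest indeg_old outdeg_old
      by (intro exI[of _ s] exI[of _ p] exI[of _ l]) auto
  next
    case False
    then obtain t Z where tz: "t \<in> verts H" "s \<noteq> t" "indeg H s = 1" "outdeg H s = 2" "indeg H t = 1" "outdeg H t = 2"
      "\<forall>f\<in>edges H. conn H (edges H - {f}) s t"
      "Z \<subseteq> verts H" "n - 1 \<le> card Z" "\<forall>z\<in>Z. indeg H z = 2 \<and> outdeg H z = 2 \<and> \<not> conn H (avoid H z) s t"
      using rest by auto
    have t: "t \<in> verts G" using old22 tz by auto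
    have nb: "\<forall>f\<in>edges G. conn G (edges G - {f}) s t" using bridge_bwd s t tz by blast
    have xZ: "x \<notin> Z"
    proof
      assume "x \<in> Z"
      then have "\<not> conn H (avoid H x) s t" using tz by auto
      then have "\<not> conn G (edges G - {eps}) s t" using avoid_x[OF s t] by simp
      then show False using nb eps by auto
    qed
    have ZG: "Z \<subseteq> verts G" using tz xZ VH by auto
    have zz: "\<forall>z\<in>Z. indeg G z = 2 \<and> outdeg G z = 2 \<and> \<not> conn G (avoid G z) s t"
    proof
      fix z assume zZ: "z \<in> Z"
      then have z: "z \<in> verts G" and "indeg H z = 2 \<and> outdeg H z = 2 \<and> \<not> conn H (avoid H z) s t"
        using tz ZG by auto
      then show "indeg G z = 2 \<and> outdeg G z = 2 \<and> \<not> conn G (avoid G z) s t"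
        using avoid_corr[OF z s t] indeg_old[OF z] outdeg_old[OF z] by simp
    qed
    have ex: "\<exists>t Z. t \<in> verts G \<and> s \<noteq> t \<and> indeg G s = 1 \<and> outdeg G s = 2 \<and> indeg G t = 1 \<and> outdeg G t = 2 \<and>
         (\<forall>f\<in>edges G. conn G (edges G - {f}) s t) \<and> Z \<subseteq> verts G \<and> n - 1 \<le> card Z \<and>
         (\<forall>z\<in>Z. indeg G z = 2 \<and> outdeg G z = 2 \<and> \<not> conn G (avoid G z) s t)"
      apply (rule exI[of _ t], rule exI[of _ Z])
      using sp pl s t indeg_old outdeg_old tz nb zz ZG by auto
    have base: "s \<in> verts G \<and> p \<in> verts G \<and> l \<in> verts G \<and> p \<noteq> l \<and>
     indeg G p = 2 \<and> outdeg G p = 1 \<and> indeg G l = 2 \<and> outdeg G l = 1"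
      using sp pl s t indeg_old outdeg_old tz nb zz ZG by auto
    show ?thesis unfolding Inv_def
      apply (rule exI[of _ s], rule exI[of _ p], rule exI[of _ l])
      using ex base False by simp
  qed
qed

end

lemma simple_expd: "simple_expansion G eps H \<Longrightarrow> \<exists>x e1 e2 e3. expd G H eps x e1 e2 e3"
  unfolding simple_expansion_def expd_def by blast

lemma expansion_fwd: "expansion G H \<Longrightarrow> wf_graph G \<Longrightarrow> Inv n G \<Longrightarrow> wf_graph H \<and> Inv n H"
  unfolding expansion_def
proof (induction rule: rtranclp_induct)
  case base then show ?case by simp
next
  case (step y z)
  then obtain eps x e1 e2 e3 where "expd y z eps x e1 e2 e3" using simple_expd by blast
  then show ?case using step expd.wfH expd.Inv_fwd by blast
qed

lemma expansion_bwd: "expansion G H \<Longrightarrow> Inv n H \<Longrightarrow> Inv n G"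
  unfolding expansion_def
proof (induction rule: converse_rtranclp_induct)
  case base then show ?case by simp
next
  case (step y z)
  then obtain eps x e1 e2 e3 where "expd y z eps x e1 e2 e3" using simple_expd by blast
  then show ?case using step expd.Inv_bwd by blast
qed




locale isod =
  fixes G H :: dgraph and fv fe :: "nat \<Rightarrow> nat"
  assumes wf: "wf_graph G"
    and bv: "bij_betw fv (verts G) (verts H)" and be: "bij_betw fe (edges G) (edges H)"
    and st: "\<forall>e\<in>edges G. src H (fe e) = fv (src G e) \<and> tgt H (fe e) = fv (tgt G e)"
begin

lemma inV: "\<And>e. e \<in> edges G \<Longrightarrow> src G e \<in> verts G \<and> tgt G e \<in> verts G"
  using wf unfolding wf_graph_def by auto

lemma injv: "inj_on fv (verts G)" using bv by (rule bij_betw_imp_inj_on)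
lemma inje: "inj_on fe (edges G)" using be by (rule bij_betw_imp_inj_on)
lemma imV: "fv ` verts G = verts H" using bv by (rule bij_betw_imp_surj_on)
lemma imE: "fe ` edges G = edges H" using be by (rule bij_betw_imp_surj_on)

lemma conn_fwd:
  assumes F: "F \<subseteq> edges G" shows "conn G F a b \<Longrightarrow> conn H (fe ` F) (fv a) (fv b)"
proof (rule rtranclp_map[of "step G F" "step H (fe ` F)" fv])
  fix u v assume "step G F u v"
  then obtain e where e: "e \<in> F" and uv: "(src G e = u \<and> tgt G e = v) \<or> (src G e = v \<and> tgt G e = u)"
    unfolding step_def by blast
  have "src H (fe e) = fv (src G e)" "tgt H (fe e) = fv (tgt G e)" using st e F by auto
  then have "step H (fe ` F) (fv u) (fv v)" using uv e unfolding step_def by auto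
  then show "conn H (fe ` F) (fv u) (fv v)" by blast
qed

lemma conn_bwd:
  assumes F: "F \<subseteq> edges G" and a: "a \<in> verts G" and b: "b \<in> verts G"
    and c: "conn H (fe ` F) (fv a) (fv b)"
  shows "conn G F a b"
proof -
  define \<pi> where "\<pi> = inv_into (verts G) fv"
  have pi: "\<And>y. y \<in> verts G \<Longrightarrow> \<pi> (fv y) = y" unfolding \<pi>_def using injv by simp
  have "conn G F (\<pi> (fv a)) (\<pi> (fv b))"
  proof (rule rtranclp_map[of "step H (fe ` F)" "step G F" \<pi>, OF _ c])
    fix u v assume "step H (fe ` F) u v"
    then obtain e where e: "e \<in> F" and uv: "(src H (fe e) = u \<and> tgt H (fe e) = v) \<or> (src H (fe e) = v \<and> tgt H (fe e) = u)"
      unfolding step_def by blast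
    have eG: "e \<in> edges G" using e F by auto
    have "\<pi> (src H (fe e)) = src G e" "\<pi> (tgt H (fe e)) = tgt G e" using st eG pi inV by auto
    then have "(src G e = \<pi> u \<and> tgt G e = \<pi> v) \<or> (src G e = \<pi> v \<and> tgt G e = \<pi> u)" using uv by auto
    then have "step G F (\<pi> u) (\<pi> v)" using e unfolding step_def by blast
    then show "conn G F (\<pi> u) (\<pi> v)" by blast
  qed
  then show ?thesis using pi a b by simp
qed

lemma indeg_iso: assumes y: "y \<in> verts G" shows "indeg H (fv y) = indeg G y"
proof -
  have "{e\<in>edges H. tgt H e = fv y} = fe ` {e\<in>edges G. tgt G e = y}"
  proof (rule set_eqI, rule iffI)
    fix e' assume "e' \<in> {e\<in>edges H. tgt H e = fv y}"
    then have e'H: "e' \<in> edges H" and te: "tgt H e' = fv y" by auto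
    then obtain e where e: "e \<in> edges G" "e' = fe e" using imE by blast
    then have "fv (tgt G e) = fv y" using st te by (metis)
    then have "tgt G e = y" using injv inV[OF e(1)] y by (simp add: inj_on_eq_iff)
    then show "e' \<in> fe ` {e\<in>edges G. tgt G e = y}" using e by auto
  next
    fix e' assume "e' \<in> fe ` {e\<in>edges G. tgt G e = y}"
    then obtain e where e: "e \<in> edges G" "tgt G e = y" "e' = fe e" by blast
    then have "e' \<in> edges H" using imE by blast
    moreover have "tgt H e' = fv y" using st e by blast
    ultimately show "e' \<in> {e\<in>edges H. tgt H e = fv y}" by blast
  qed
  moreover have "card (fe ` {e\<in>edges G. tgt G e = y}) = card {e\<in>edges G. tgt G e = y}"
    by (rule card_image, rule inj_on_subset[OF inje]) blast
  ultimately show ?thesis unfolding indeg_def by simp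
qed

lemma outdeg_iso: assumes y: "y \<in> verts G" shows "outdeg H (fv y) = outdeg G y"
proof -
  have "{e\<in>edges H. src H e = fv y} = fe ` {e\<in>edges G. src G e = y}"
  proof (rule set_eqI, rule iffI)
    fix e' assume "e' \<in> {e\<in>edges H. src H e = fv y}"
    then have e'H: "e' \<in> edges H" and te: "src H e' = fv y" by auto
    then obtain e where e: "e \<in> edges G" "e' = fe e" using imE by blast
    then have "fv (src G e) = fv y" using st te by (metis)
    then have "src G e = y" using injv inV[OF e(1)] y by (simp add: inj_on_eq_iff)
    then show "e' \<in> fe ` {e\<in>edges G. src G e = y}" using e by auto
  next
    fix e' assume "e' \<in> fe ` {e\<in>edges G. src G e = y}"
    then obtain e where e: "e \<in> edges G" "src G e = y" "e' = fe e" by blast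
    then have "e' \<in> edges H" using imE by blast
    moreover have "src H e' = fv y" using st e by blast
    ultimately show "e' \<in> {e\<in>edges H. src H e = fv y}" by blast
  qed
  moreover have "card (fe ` {e\<in>edges G. src G e = y}) = card {e\<in>edges G. src G e = y}"
    by (rule card_image, rule inj_on_subset[OF inje]) blast
  ultimately show ?thesis unfolding outdeg_def by simp
qed

lemma avoid_iso: assumes z: "z \<in> verts G" shows "avoid H (fv z) = fe ` avoid G z"
proof (rule set_eqI, rule iffI)
  fix e' assume "e' \<in> avoid H (fv z)"
  then have e'H: "e' \<in> edges H" and te: "src H e' \<noteq> fv z" "tgt H e' \<noteq> fv z" unfolding avoid_def by auto
  then obtain e where e: "e \<in> edges G" "e' = fe e" using imE by blast
  then have "fv (src G e) \<noteq> fv z" "fv (tgt G e) \<noteq> fv z" using st te by auto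
  then have "src G e \<noteq> z" "tgt G e \<noteq> z" by auto
  then show "e' \<in> fe ` avoid G z" unfolding avoid_def using e by auto
next
  fix e' assume "e' \<in> fe ` avoid G z"
  then obtain e where e: "e \<in> edges G" "e' = fe e" "src G e \<noteq> z" "tgt G e \<noteq> z"
    unfolding avoid_def by auto
  then have "fv (src G e) \<noteq> fv z" "fv (tgt G e) \<noteq> fv z" using injv inV[OF e(1)] z by (simp_all add: inj_on_eq_iff)
  then show "e' \<in> avoid H (fv z)" unfolding avoid_def using e st imE by auto
qed

lemma edel_iso: assumes f: "f \<in> edges G" shows "edges H - {fe f} = fe ` (edges G - {f})"
proof (rule set_eqI, rule iffI)
  fix e' assume "e' \<in> edges H - {fe f}"
  then obtain e where "e \<in> edges G" "e' = fe e" "fe e \<noteq> fe f" using imE by auto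
  then show "e' \<in> fe ` (edges G - {f})" by auto
next
  fix e' assume "e' \<in> fe ` (edges G - {f})"
  then obtain e where e: "e \<in> edges G" "e \<noteq> f" "e' = fe e" by auto
  then have "fe e \<noteq> fe f" using inje f by (simp add: inj_on_eq_iff)
  then show "e' \<in> edges H - {fe f}" using e imE by auto
qed

lemma Inv_iso: assumes I: "Inv n G" shows "Inv n H"
proof -
  from I obtain s p l where sp: "s \<in> verts G" "p \<in> verts G" "l \<in> verts G" "p \<noteq> l"
     "indeg G p = 2" "outdeg G p = 1" "indeg G l = 2" "outdeg G l = 1"
     and rest: "(if n = 0 then indeg G s = 0 \<and> outdeg G s = 2 else
      (\<exists>t Z. t \<in> verts G \<and> s \<noteq> t \<and> indeg G s = 1 \<and> outdeg G s = 2 \<and> indeg G t = 1 \<and> outdeg G t = 2 \<and>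
         (\<forall>f\<in>edges G. conn G (edges G - {f}) s t) \<and> Z \<subseteq> verts G \<and> n - 1 \<le> card Z \<and>
         (\<forall>z\<in>Z. indeg G z = 2 \<and> outdeg G z = 2 \<and> \<not> conn G (avoid G z) s t)))"
    unfolding Inv_def by blast
  have base: "fv s \<in> verts H \<and> fv p \<in> verts H \<and> fv l \<in> verts H \<and> fv p \<noteq> fv l \<and>
     indeg H (fv p) = 2 \<and> outdeg H (fv p) = 1 \<and> indeg H (fv l) = 2 \<and> outdeg H (fv l) = 1"
  proof -
    have "fv p \<noteq> fv l" using injv sp by (simp add: inj_on_eq_iff)
    moreover have "fv s \<in> verts H" "fv p \<in> verts H" "fv l \<in> verts H" using sp imV by auto
    ultimately show ?thesis using sp indeg_iso outdeg_iso by simp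
  qed
  show ?thesis
  proof (cases "n = 0")
    case True
    then have hs: "indeg H (fv s) = 0 \<and> outdeg H (fv s) = 2" using rest indeg_iso outdeg_iso sp by simp
    show ?thesis unfolding Inv_def
      apply (rule exI[of _ "fv s"], rule exI[of _ "fv p"], rule exI[of _ "fv l"])
      using hs base True by simp
  next
    case False
    then obtain t Z where tz: "t \<in> verts G" "s \<noteq> t" "indeg G s = 1" "outdeg G s = 2" "indeg G t = 1" "outdeg G t = 2"
      "\<forall>f\<in>edges G. conn G (edges G - {f}) s t"
      "Z \<subseteq> verts G" "n - 1 \<le> card Z" "\<forall>z\<in>Z. indeg G z = 2 \<and> outdeg G z = 2 \<and> \<not> conn G (avoid G z) s t"
      using rest by auto
    have nb: "\<forall>f'\<in>edges H. conn H (edges H - {f'}) (fv s) (fv t)"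
    proof
      fix f' assume "f' \<in> edges H"
      then obtain f where f: "f \<in> edges G" "f' = fe f" using imE by auto
      have "conn G (edges G - {f}) s t" using tz f by auto
      from conn_fwd[OF _ this] show "conn H (edges H - {f'}) (fv s) (fv t)"
        using edel_iso[OF f(1)] f by auto
    qed
    have zz: "\<forall>z'\<in>fv ` Z. indeg H z' = 2 \<and> outdeg H z' = 2 \<and> \<not> conn H (avoid H z') (fv s) (fv t)"
    proof
      fix z' assume "z' \<in> fv ` Z"
      then obtain z where z: "z \<in> Z" "z' = fv z" by auto
      have zV: "z \<in> verts G" using z tz by auto
      have c: "\<not> conn G (avoid G z) s t" using tz z by auto
      have "\<not> conn H (avoid H z') (fv s) (fv t)"
      proof
        assume "conn H (avoid H z') (fv s) (fv t)"
        then have "conn H (fe ` avoid G z) (fv s) (fv t)" using avoid_iso[OF zV] z by simp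
        then have "conn G (avoid G z) s t" using conn_bwd[of "avoid G z" s t] sp tz unfolding avoid_def by auto
        then show False using c by simp
      qed
      then show "indeg H z' = 2 \<and> outdeg H z' = 2 \<and> \<not> conn H (avoid H z') (fv s) (fv t)"
        using indeg_iso[OF zV] outdeg_iso[OF zV] tz z by auto
    qed
    have cZ: "card (fv ` Z) = card Z" using inj_on_subset[OF injv tz(8)] by (rule card_image)
    have ex: "\<exists>t Z. t \<in> verts H \<and> fv s \<noteq> t \<and> indeg H (fv s) = 1 \<and> outdeg H (fv s) = 2 \<and> indeg H t = 1 \<and> outdeg H t = 2 \<and>
         (\<forall>f\<in>edges H. conn H (edges H - {f}) (fv s) t) \<and> Z \<subseteq> verts H \<and> n - 1 \<le> card Z \<and>
         (\<forall>z\<in>Z. indeg H z = 2 \<and> outdeg H z = 2 \<and> \<not> conn H (avoid H z) (fv s) t)"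
      apply (rule exI[of _ "fv t"], rule exI[of _ "fv ` Z"])
    proof -
      have "fv s \<noteq> fv t" using injv sp tz by (simp add: inj_on_eq_iff)
      moreover have "fv t \<in> verts H" "fv ` Z \<subseteq> verts H" using tz imV by blast+
      ultimately show "fv t \<in> verts H \<and> fv s \<noteq> fv t \<and> indeg H (fv s) = 1 \<and> outdeg H (fv s) = 2 \<and> indeg H (fv t) = 1 \<and> outdeg H (fv t) = 2 \<and>
         (\<forall>f\<in>edges H. conn H (edges H - {f}) (fv s) (fv t)) \<and> fv ` Z \<subseteq> verts H \<and> n - 1 \<le> card (fv ` Z) \<and>
         (\<forall>z\<in>fv ` Z. indeg H z = 2 \<and> outdeg H z = 2 \<and> \<not> conn H (avoid H z) (fv s) (fv t))"
        using tz nb zz cZ sp indeg_iso outdeg_iso by simp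
    qed
    show ?thesis unfolding Inv_def
      apply (rule exI[of _ "fv s"], rule exI[of _ "fv p"], rule exI[of _ "fv l"])
      using ex base False by simp
  qed
qed

end

lemma graph_iso_Inv: "graph_iso G H \<Longrightarrow> wf_graph G \<Longrightarrow> Inv n G \<Longrightarrow> Inv n H"
  unfolding graph_iso_def using isod.Inv_iso isod.intro by blast




lemma O_simps:
  "verts (O_graph n) = {0..n+2}" "edges (O_graph n) = {0..<2*n+4}"
  "i < n \<Longrightarrow> src (O_graph n) (2*i) = i" "i < n \<Longrightarrow> tgt (O_graph n) (2*i) = Suc i"
  "i < n \<Longrightarrow> src (O_graph n) (Suc (2*i)) = Suc i" "i < n \<Longrightarrow> tgt (O_graph n) (Suc (2*i)) = i"
  "0 < n \<Longrightarrow> src (O_graph n) 0 = 0" "0 < n \<Longrightarrow> tgt (O_graph n) 0 = 1"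
  "0 < n \<Longrightarrow> src (O_graph n) (Suc 0) = 1" "0 < n \<Longrightarrow> tgt (O_graph n) (Suc 0) = 0"
  "src (O_graph n) (2*n) = 0" "tgt (O_graph n) (2*n) = Suc n"
  "src (O_graph n) (Suc (2*n)) = Suc n" "tgt (O_graph n) (Suc (2*n)) = Suc n"
  "src (O_graph n) (Suc (Suc (2*n))) = n" "tgt (O_graph n) (Suc (Suc (2*n))) = Suc (Suc n)"
  "src (O_graph n) (Suc (Suc (Suc (2*n)))) = Suc (Suc n)" "tgt (O_graph n) (Suc (Suc (Suc (2*n)))) = Suc (Suc n)"
  "src (O_graph n) (2*n+3) = Suc (Suc n)" "tgt (O_graph n) (2*n+3) = Suc (Suc n)"
  by (simp_all add: O_graph_def)

lemma O_cases:
  assumes "e \<in> edges (O_graph n)"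
  obtains i where "i < n" "e = 2*i" | i where "i < n" "e = 2*i+1"
    | "e = 2*n" | "e = 2*n+1" | "e = 2*n+2" | "e = 2*n+3"
proof -
  have e: "e < 2*n+4" using assms by (simp add: O_graph_def)
  show ?thesis
  proof (cases "e < 2*n")
    case True
    show ?thesis
    proof (cases "even e")
      case True
      then obtain i where "e = 2*i" by (auto elim: evenE)
      then show ?thesis using that \<open>e < 2*n\<close> by simp
    next
      case False
      then obtain i where "e = 2*i+1" by (auto elim: oddE)
      then show ?thesis using that \<open>e < 2*n\<close> by simp
    qed
  next
    case False
    then have "e = 2*n \<or> e = 2*n+1 \<or> e = 2*n+2 \<or> e = 2*n+3" using e by arith
    then show ?thesis using that by blast
  qed
qed

lemma O_set:
  assumes "\<And>e. e \<in> edges (O_graph n) \<Longrightarrow> P e \<longleftrightarrow> e \<in> S" "S \<subseteq> edges (O_graph n)"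
  shows "{e \<in> edges (O_graph n). P e} = S"
  using assms by blast

lemma t0: "n \<ge> 1 \<Longrightarrow> {e \<in> edges (O_graph n). tgt (O_graph n) e = 0} = {1}"
proof (rule O_set)
  fix e assume n: "n \<ge> 1" and e: "e \<in> edges (O_graph n)"
  show "tgt (O_graph n) e = 0 \<longleftrightarrow> e \<in> {1}"
    using e by (cases rule: O_cases) (use n in \<open>auto simp: O_simps\<close>)
qed (auto simp: O_simps)

lemma s0: "n \<ge> 1 \<Longrightarrow> {e \<in> edges (O_graph n). src (O_graph n) e = 0} = {0, 2*n}"
proof (rule O_set)
  fix e assume n: "n \<ge> 1" and e: "e \<in> edges (O_graph n)"
  show "src (O_graph n) e = 0 \<longleftrightarrow> e \<in> {0, 2*n}"
    using e by (cases rule: O_cases) (use n in \<open>auto simp: O_simps\<close>)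
qed (auto simp: O_simps)

lemma tp: "{e \<in> edges (O_graph n). tgt (O_graph n) e = n+1} = {2*n, 2*n+1}"
proof (rule O_set)
  fix e assume e: "e \<in> edges (O_graph n)"
  show "tgt (O_graph n) e = n+1 \<longleftrightarrow> e \<in> {2*n, 2*n+1}"
    using e by (cases rule: O_cases) (auto simp: O_simps)
qed (auto simp: O_simps)

lemma sp: "{e \<in> edges (O_graph n). src (O_graph n) e = n+1} = {2*n+1}"
proof (rule O_set)
  fix e assume e: "e \<in> edges (O_graph n)"
  show "src (O_graph n) e = n+1 \<longleftrightarrow> e \<in> {2*n+1}"
    using e by (cases rule: O_cases) (auto simp: O_simps)
qed (auto simp: O_simps)

lemma tl: "{e \<in> edges (O_graph n). tgt (O_graph n) e = n+2} = {2*n+2, 2*n+3}"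
proof (rule O_set)
  fix e assume e: "e \<in> edges (O_graph n)"
  show "tgt (O_graph n) e = n+2 \<longleftrightarrow> e \<in> {2*n+2, 2*n+3}"
    using e by (cases rule: O_cases) (auto simp: O_simps)
qed (auto simp: O_simps)

lemma sl: "{e \<in> edges (O_graph n). src (O_graph n) e = n+2} = {2*n+3}"
proof (rule O_set)
  fix e assume e: "e \<in> edges (O_graph n)"
  show "src (O_graph n) e = n+2 \<longleftrightarrow> e \<in> {2*n+3}"
    using e by (cases rule: O_cases) (auto simp: O_simps)
qed (auto simp: O_simps)

lemma t00: "n = 0 \<Longrightarrow> {e \<in> edges (O_graph n). tgt (O_graph n) e = 0} = {}"
  by (auto simp: O_graph_def)

lemma s00: "n = 0 \<Longrightarrow> {e \<in> edges (O_graph n). src (O_graph n) e = 0} = {0, 2}"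
  by (auto simp: O_graph_def)
lemma tn: "n \<ge> 1 \<Longrightarrow> {e \<in> edges (O_graph n). tgt (O_graph n) e = n} = {2*n-2}"
proof (rule O_set)
  fix e assume n: "n \<ge> 1" and e: "e \<in> edges (O_graph n)"
  show "tgt (O_graph n) e = n \<longleftrightarrow> e \<in> {2*n-2}"
    using e apply (cases rule: O_cases)
    using n apply (auto simp: O_simps)
    apply (presburger+)?
    done
qed (auto simp: O_simps)

lemma sn: "n \<ge> 1 \<Longrightarrow> {e \<in> edges (O_graph n). src (O_graph n) e = n} = {2*n-1, 2*n+2}"
proof (rule O_set)
  fix e assume n: "n \<ge> 1" and e: "e \<in> edges (O_graph n)"
  show "src (O_graph n) e = n \<longleftrightarrow> e \<in> {2*n-1, 2*n+2}"
    using e apply (cases rule: O_cases)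
    using n apply (auto simp: O_simps)
    apply (presburger+)?
    done
qed (auto simp: O_simps)

lemma tz: "0 < z \<Longrightarrow> z < n \<Longrightarrow> {e \<in> edges (O_graph n). tgt (O_graph n) e = z} = {2*z-2, 2*z+1}"
proof (rule O_set)
  fix e assume n: "0 < z" "z < n" and e: "e \<in> edges (O_graph n)"
  show "tgt (O_graph n) e = z \<longleftrightarrow> e \<in> {2*z-2, 2*z+1}"
    using e apply (cases rule: O_cases)
    using n apply (auto simp: O_simps)
    apply (presburger+)?
    done
qed (auto simp: O_simps)

lemma sz: "0 < z \<Longrightarrow> z < n \<Longrightarrow> {e \<in> edges (O_graph n). src (O_graph n) e = z} = {2*z-1, 2*z}"
proof (rule O_set)
  fix e assume n: "0 < z" "z < n" and e: "e \<in> edges (O_graph n)"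
  show "src (O_graph n) e = z \<longleftrightarrow> e \<in> {2*z-1, 2*z}"
    using e apply (cases rule: O_cases)
    using n apply (auto simp: O_simps)
    apply (presburger+)?
    done
qed (auto simp: O_simps)




lemma O_sep:
  assumes z: "0 < z" "z < n"
  shows "\<not> conn (O_graph n) (avoid (O_graph n) z) 0 n"
proof
  let ?P = "\<lambda>a. a < z \<or> a = n+1"
  have inv: "\<And>a b. conn (O_graph n) (avoid (O_graph n) z) a b \<Longrightarrow> ?P a \<Longrightarrow> ?P b"
  proof -
    fix a b assume "conn (O_graph n) (avoid (O_graph n) z) a b" "?P a"
    then show "?P b"
    proof (induction rule: rtranclp_induct)
      case base then show ?case by simp
    next
      case (step b c)
      then have Pb: "?P b" by simp
      from step(2) obtain e where e: "e \<in> edges (O_graph n)" "src (O_graph n) e \<noteq> z" "tgt (O_graph n) e \<noteq> z"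
        and bc: "(src (O_graph n) e = b \<and> tgt (O_graph n) e = c) \<or> (src (O_graph n) e = c \<and> tgt (O_graph n) e = b)"
        unfolding step_def avoid_def by blast
      from e(1) show ?case
        apply (cases rule: O_cases)
        using e(2,3) bc Pb z by (auto simp: O_simps)
    qed
  qed
  assume "conn (O_graph n) (avoid (O_graph n) z) 0 n"
  from inv[OF this] z show False by simp
qed

lemma O_nobridge:
  assumes f: "f \<in> edges (O_graph n)"
  shows "conn (O_graph n) (edges (O_graph n) - {f}) 0 n"
proof -
  have "\<And>k. k \<le> n \<Longrightarrow> conn (O_graph n) (edges (O_graph n) - {f}) 0 k"
  proof -
    fix k show "k \<le> n \<Longrightarrow> conn (O_graph n) (edges (O_graph n) - {f}) 0 k"
    proof (induction k)
      case 0 then show ?case by simp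
    next
      case (Suc k)
      then have k: "k < n" by simp
      have "step (O_graph n) (edges (O_graph n) - {f}) k (Suc k)"
      proof (cases "f = 2*k")
        case True
        have "Suc (2*k) \<in> edges (O_graph n) - {f}" using k True by (simp add: O_simps)
        then show ?thesis unfolding step_def using k O_simps(5,6)[OF k] by blast
      next
        case False
        have "2*k \<in> edges (O_graph n) - {f}" using k False by (simp add: O_simps)
        then show ?thesis unfolding step_def using k O_simps(3,4)[OF k] by blast
      qed
      then show ?case using Suc by (meson k less_imp_le rtranclp.rtrancl_into_rtrancl)
    qed
  qed
  then show ?thesis by simp
qed

lemma Inv_O: "Inv n (O_graph n)"
proof (cases "n = 0")
  case True
  have d: "indeg (O_graph n) 0 = 0" "outdeg (O_graph n) 0 = 2"
    unfolding indeg_def outdeg_def t00[OF True] s00[OF True] by simp_all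
  have pl: "indeg (O_graph n) (n+1) = 2" "outdeg (O_graph n) (n+1) = 1"
     "indeg (O_graph n) (n+2) = 2" "outdeg (O_graph n) (n+2) = 1"
    unfolding indeg_def outdeg_def using tp sp tl sl by simp_all
  show ?thesis unfolding Inv_def
    apply (rule exI[of _ 0], rule exI[of _ "n+1"], rule exI[of _ "n+2"])
    using d pl True by (simp add: O_simps)
next
  case False
  then have n1: "n \<ge> 1" by simp
  have d: "indeg (O_graph n) 0 = 1" "outdeg (O_graph n) 0 = 2"
     "indeg (O_graph n) n = 1" "outdeg (O_graph n) n = 2"
    unfolding indeg_def outdeg_def using t0[OF n1] s0[OF n1] tn[OF n1] sn[OF n1] n1 by simp_all
  have pl: "indeg (O_graph n) (n+1) = 2" "outdeg (O_graph n) (n+1) = 1"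
     "indeg (O_graph n) (n+2) = 2" "outdeg (O_graph n) (n+2) = 1"
    unfolding indeg_def outdeg_def using tp sp tl sl by simp_all
  have zz: "\<forall>z\<in>{1..n-1}. indeg (O_graph n) z = 2 \<and> outdeg (O_graph n) z = 2 \<and> \<not> conn (O_graph n) (avoid (O_graph n) z) 0 n"
  proof
    fix z assume "z \<in> {1..n-1}"
    then have z: "0 < z" "z < n" by auto
    have "indeg (O_graph n) z = 2" "outdeg (O_graph n) z = 2"
      unfolding indeg_def outdeg_def using tz[OF z] sz[OF z] z by simp_all
    then show "indeg (O_graph n) z = 2 \<and> outdeg (O_graph n) z = 2 \<and> \<not> conn (O_graph n) (avoid (O_graph n) z) 0 n"
      using O_sep[OF z] by simp
  qed
  have ex: "\<exists>t Z. t \<in> verts (O_graph n) \<and> 0 \<noteq> t \<and> indeg (O_graph n) 0 = 1 \<and> outdeg (O_graph n) 0 = 2 \<and>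
      indeg (O_graph n) t = 1 \<and> outdeg (O_graph n) t = 2 \<and>
      (\<forall>f\<in>edges (O_graph n). conn (O_graph n) (edges (O_graph n) - {f}) 0 t) \<and> Z \<subseteq> verts (O_graph n) \<and> n - 1 \<le> card Z \<and>
      (\<forall>z\<in>Z. indeg (O_graph n) z = 2 \<and> outdeg (O_graph n) z = 2 \<and> \<not> conn (O_graph n) (avoid (O_graph n) z) 0 t)"
    apply (rule exI[of _ n], rule exI[of _ "{1..n-1}"])
    using d zz n1 O_nobridge by (auto simp: O_simps)
  show ?thesis unfolding Inv_def
    apply (rule exI[of _ 0], rule exI[of _ "n+1"], rule exI[of _ "n+2"])
    using ex d pl False by (simp add: O_simps)
qed

theorem mainTheorem7:
  fixes n :: nat and G :: dgraph
  assumes "wf_graph G"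
    and "has_rearrangement (O_graph n) G"
  shows "2*n + 4 \<le> card (edges G)"
proof -
  obtain G' H' where r: "expansion (O_graph n) G'" "expansion G H'" "graph_iso G' H'"
    using assms(2) unfolding has_rearrangement_def by blast
  have wfO: "wf_graph (O_graph n)" unfolding wf_graph_def by (auto simp: O_graph_def)
  have "wf_graph G' \<and> Inv n G'" using expansion_fwd[OF r(1) wfO Inv_O] .
  then have "Inv n H'" using graph_iso_Inv r(3) by blast
  then have "Inv n G" using expansion_bwd r(2) by blast
  then show ?thesis using Inv_card assms(1) by blast
qed


end
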